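(* Let $\mathcal A$ be a bialgebra with unit, comultiplication $\Delta$ and counit $\varepsilon$, and let $\mathcal A_1,\mathcal A_2\subset\mathcal A$ be subalgebras such that the multiplication map $\mu:\mathcal A_1\otimes\mathcal A_2\to\mathcal A$ is a linear isomorphism, $\Delta(\mathcal A_1)\subset\mathcal A\otimes\mathcal A_1$ and $\Delta(\mathcal A_2)\subset\mathcal A_2\otimes\mathcal A$. Define $\Pi_1,\Pi_2:\mathcal A\to\mathcal A$ by $\Pi_1(a_1a_2)=a_1\varepsilon(a_2)$, $\Pi_2(a_1a_2)=\varepsilon(a_1)a_2$ for $a_1\in\mathcal A_1$, $a_2\in\mathcal A_2$. Then for every $a\in\mathcal A$, $$\mu(\Pi_1\otimes\Pi_2)\Delta(a)=a.$$
   Context: Sweedler notation: $\Delta(a)=a'\otimes a''$; the claim reads $\Pi_1(a')\Pi_2(a'')=a$. *)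

theory Defs
  imports Main "HOL.Vector_Spaces"
begin

definition algebra_over :: "('k::field \<Rightarrow> 'a::ring_1 \<Rightarrow> 'a) \<Rightarrow> bool" where
  "algebra_over scale \<longleftrightarrow> Vector_Spaces.vector_space scale \<and>
     (\<forall>c x y. scale c (x * y) = scale c x * y \<and> scale c (x * y) = x * scale c y)"

definition bilin_on :: "('k::field \<Rightarrow> 'a::ab_group_add \<Rightarrow> 'a) \<Rightarrow> 'a set \<Rightarrow> 'a set \<Rightarrow> ('a \<Rightarrow> 'a \<Rightarrow> 'k) \<Rightarrow> bool" where
  "bilin_on scale S T B \<longleftrightarrow>
     (\<forall>x\<in>S. \<forall>x'\<in>S. \<forall>y\<in>T. B (x + x') y = B x y + B x' y) \<and>
     (\<forall>x\<in>S. \<forall>y\<in>T. \<forall>y'\<in>T. B x (y + y') = B x y + B x y') \<and>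
     (\<forall>c. \<forall>x\<in>S. \<forall>y\<in>T. B (scale c x) y = c * B x y \<and> B x (scale c y) = c * B x y)"

text \<open>A list of pairs in S \<times> T represents the tensor \<Sum> x_i \<otimes> y_i in S \<otimes> T.
 Over a field, two such tensors are equal iff every bilinear form on S \<times> T
 takes the same value on them.\<close>
definition tensor_eq_on :: "('k::field \<Rightarrow> 'a::ab_group_add \<Rightarrow> 'a) \<Rightarrow> 'a set \<Rightarrow> 'a set \<Rightarrow> ('a \<times> 'a) list \<Rightarrow> ('a \<times> 'a) list \<Rightarrow> bool" where
  "tensor_eq_on scale S T xs ys \<longleftrightarrow>
     (\<forall>B. bilin_on scale S T B \<longrightarrow> (\<Sum>(x, y)\<leftarrow>xs. B x y) = (\<Sum>(x, y)\<leftarrow>ys. B x y))"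

abbreviation tensor_eq :: "('k::field \<Rightarrow> 'a::ab_group_add \<Rightarrow> 'a) \<Rightarrow> ('a \<times> 'a) list \<Rightarrow> ('a \<times> 'a) list \<Rightarrow> bool" where
  "tensor_eq scale \<equiv> tensor_eq_on scale UNIV UNIV"

definition trilin :: "('k::field \<Rightarrow> 'a::ab_group_add \<Rightarrow> 'a) \<Rightarrow> ('a \<Rightarrow> 'a \<Rightarrow> 'a \<Rightarrow> 'k) \<Rightarrow> bool" where
  "trilin scale B \<longleftrightarrow>
     (\<forall>x x' y z. B (x + x') y z = B x y z + B x' y z) \<and>
     (\<forall>x y y' z. B x (y + y') z = B x y z + B x y' z) \<and>
     (\<forall>x y z z'. B x y (z + z') = B x y z + B x y z') \<and>
     (\<forall>c x y z. B (scale c x) y z = c * B x y z \<and> B x (scale c y) z = c * B x y z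
                \<and> B x y (scale c z) = c * B x y z)"

definition tensor3_eq :: "('k::field \<Rightarrow> 'a::ab_group_add \<Rightarrow> 'a) \<Rightarrow> ('a \<times> 'a \<times> 'a) list \<Rightarrow> ('a \<times> 'a \<times> 'a) list \<Rightarrow> bool" where
  "tensor3_eq scale xs ys \<longleftrightarrow>
     (\<forall>B. trilin scale B \<longrightarrow> (\<Sum>(x, y, z)\<leftarrow>xs. B x y z) = (\<Sum>(x, y, z)\<leftarrow>ys. B x y z))"

text \<open>Bialgebra: the comultiplication is given in Sweedler form, Delta a being a
 list of pairs (a', a'') representing \<Sum> a' \<otimes> a''.\<close>
definition bialgebra :: "('k::field \<Rightarrow> 'a::ring_1 \<Rightarrow> 'a) \<Rightarrow> ('a \<Rightarrow> ('a \<times> 'a) list) \<Rightarrow> ('a \<Rightarrow> 'k) \<Rightarrow> bool" where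
  "bialgebra scale Delta eps \<longleftrightarrow>
     algebra_over scale \<and>
     \<comment> \<open>Delta linear\<close>
     (\<forall>x y. tensor_eq scale (Delta (x + y)) (Delta x @ Delta y)) \<and>
     (\<forall>c x. tensor_eq scale (Delta (scale c x)) (map (\<lambda>(u, v). (scale c u, v)) (Delta x))) \<and>
     \<comment> \<open>coassociativity\<close>
     (\<forall>a. tensor3_eq scale
            (concat (map (\<lambda>(x, y). map (\<lambda>(u, v). (u, v, y)) (Delta x)) (Delta a)))
            (concat (map (\<lambda>(x, y). map (\<lambda>(u, v). (x, u, v)) (Delta y)) (Delta a)))) \<and>
     \<comment> \<open>eps linear, counit axioms\<close>
     Vector_Spaces.linear scale (*) eps \<and>
     (\<forall>a. (\<Sum>(x, y)\<leftarrow>Delta a. scale (eps x) y) = a) \<and>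
     (\<forall>a. (\<Sum>(x, y)\<leftarrow>Delta a. scale (eps y) x) = a) \<and>
     \<comment> \<open>Delta and eps are unital algebra homomorphisms\<close>
     (\<forall>a b. tensor_eq scale (Delta (a * b))
              (concat (map (\<lambda>(x, y). map (\<lambda>(x', y'). (x * x', y * y')) (Delta b)) (Delta a)))) \<and>
     tensor_eq scale (Delta 1) [(1, 1)] \<and>
     (\<forall>a b. eps (a * b) = eps a * eps b) \<and> eps 1 = 1"

definition subalgebra :: "('k::field \<Rightarrow> 'a::ring_1 \<Rightarrow> 'a) \<Rightarrow> 'a set \<Rightarrow> bool" where
  "subalgebra scale S \<longleftrightarrow> module.subspace scale S \<and> 1 \<in> S \<and> (\<forall>x\<in>S. \<forall>y\<in>S. x * y \<in> S)"

end

theory Submission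
  imports Defs
begin

lemma hom_sum_list:
  assumes "\<And>x y. h (x + y) = h x + h y" and "h 0 = 0"
  shows "h (\<Sum>(x, y)\<leftarrow>xs. F x y) = (\<Sum>(x, y)\<leftarrow>xs. h (F x y))"
  using assms by (induction xs) auto

lemma sum_list_map_concat:
  "sum_list (map f (concat xss)) = sum_list (map (\<lambda>xs. sum_list (map f xs)) xss)"
  by (induct xss) auto

lemma sum_list_addf2:
  fixes F H :: "'b \<Rightarrow> 'c \<Rightarrow> 'a::ab_group_add"
  shows "(\<Sum>(x, y)\<leftarrow>xs. F x y + H x y) = (\<Sum>(x, y)\<leftarrow>xs. F x y) + (\<Sum>(x, y)\<leftarrow>xs. H x y)"
  by (induct xs) (auto simp: algebra_simps)

context vector_space
begin

lemma sep_functional: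
  assumes "d \<noteq> 0"
  shows "\<exists>\<phi>. (\<forall>x y. \<phi> (x + y) = \<phi> x + \<phi> y) \<and> (\<forall>c x. \<phi> (c *s x) = c * \<phi> x) \<and> \<phi> d \<noteq> 0"
proof -
  obtain B where B: "independent B" "UNIV \<subseteq> span B"
    using maximal_independent_subset[of UNIV] by blast
  hence sp: "span B = UNIV" by auto
  have "\<exists>b. representation B d b \<noteq> 0"
  proof (rule ccontr)
    assume "\<not> ?thesis"
    then have "{b. representation B d b \<noteq> 0} = {}" by auto
    with sum_nonzero_representation_eq[OF B(1), of d] sp have "d = 0" by simp
    with assms show False by simp
  qed
  then obtain b where b: "representation B d b \<noteq> 0" by blast
  have "Vector_Spaces.linear scale (*) (\<lambda>v. representation B v b)"
    using linear_representation[OF B(1) sp, of b] by simp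
  then interpret L: Vector_Spaces.linear scale "(*)" "\<lambda>v. representation B v b" .
  show ?thesis using b L.add L.scale by (intro exI[of _ "\<lambda>v. representation B v b"]) auto
qed

end

lemma transfer:
  fixes scale :: "'k::field \<Rightarrow> 'a::ab_group_add \<Rightarrow> 'a" and F :: "'a \<Rightarrow> 'a \<Rightarrow> 'a"
  assumes vs: "vector_space scale" and te: "tensor_eq scale xs ys"
    and a1: "\<And>x x' y. F (x + x') y = F x y + F x' y"
    and a2: "\<And>x y y'. F x (y + y') = F x y + F x y'"
    and s1: "\<And>c x y. F (scale c x) y = scale c (F x y)"
    and s2: "\<And>c x y. F x (scale c y) = scale c (F x y)"
  shows "(\<Sum>(x, y)\<leftarrow>xs. F x y) = (\<Sum>(x, y)\<leftarrow>ys. F x y)"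
proof (rule ccontr)
  assume ne: "\<not> ?thesis"
  interpret V: vector_space scale by (rule vs)
  obtain \<phi> where ph: "\<And>x y. \<phi> (x + y) = \<phi> x + \<phi> y" "\<And>c x. \<phi> (scale c x) = c * \<phi> x"
    and nz: "\<phi> ((\<Sum>(x, y)\<leftarrow>xs. F x y) - (\<Sum>(x, y)\<leftarrow>ys. F x y)) \<noteq> 0"
    using V.sep_functional[of "(\<Sum>(x, y)\<leftarrow>xs. F x y) - (\<Sum>(x, y)\<leftarrow>ys. F x y)"] ne by auto
  interpret A: additive \<phi> by unfold_locales (rule ph(1))
  have "bilin_on scale UNIV UNIV (\<lambda>x y. \<phi> (F x y))"
    unfolding bilin_on_def by (simp add: a1 a2 s1 s2 ph)
  with te have eq: "(\<Sum>(x, y)\<leftarrow>xs. \<phi> (F x y)) = (\<Sum>(x, y)\<leftarrow>ys. \<phi> (F x y))"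
    unfolding tensor_eq_on_def by blast
  have "\<phi> ((\<Sum>(x, y)\<leftarrow>xs. F x y) - (\<Sum>(x, y)\<leftarrow>ys. F x y)) = 0"
    by (simp add: A.diff hom_sum_list[OF ph(1) A.zero] eq)
  with nz show False by simp
qed


theorem mainTheorem9:
  fixes scale :: "'k::field \<Rightarrow> 'a::ring_1 \<Rightarrow> 'a"
    and Delta :: "'a \<Rightarrow> ('a \<times> 'a) list" and eps :: "'a \<Rightarrow> 'k"
    and A1 A2 :: "'a set" and Pi1 Pi2 :: "'a \<Rightarrow> 'a"
  assumes bialg: "bialgebra scale Delta eps"
    and sub1: "subalgebra scale A1" and sub2: "subalgebra scale A2"
    and mu_surj: "\<forall>a. \<exists>ps. set ps \<subseteq> A1 \<times> A2 \<and> a = (\<Sum>(x, y)\<leftarrow>ps. x * y)"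
    and mu_inj: "\<forall>ps. set ps \<subseteq> A1 \<times> A2 \<longrightarrow> (\<Sum>(x, y)\<leftarrow>ps. x * y) = 0
                   \<longrightarrow> tensor_eq_on scale A1 A2 ps []"
    and Delta1: "\<forall>a\<in>A1. \<exists>ps. snd ` set ps \<subseteq> A1 \<and> tensor_eq scale (Delta a) ps"
    and Delta2: "\<forall>a\<in>A2. \<exists>ps. fst ` set ps \<subseteq> A2 \<and> tensor_eq scale (Delta a) ps"
    and Pi1_lin: "Vector_Spaces.linear scale scale Pi1"
    and Pi2_lin: "Vector_Spaces.linear scale scale Pi2"
    and Pi1_def: "\<forall>a1\<in>A1. \<forall>a2\<in>A2. Pi1 (a1 * a2) = scale (eps a2) a1"
    and Pi2_def: "\<forall>a1\<in>A1. \<forall>a2\<in>A2. Pi2 (a1 * a2) = scale (eps a1) a2"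
  shows "(\<Sum>(x, y)\<leftarrow>Delta a. Pi1 x * Pi2 y) = a"
proof -
  have alg: "algebra_over scale" using bialg unfolding bialgebra_def by blast
  have vs: "vector_space scale" using alg unfolding algebra_over_def by blast
  interpret V: vector_space scale by (rule vs)
  have mL: "\<And>c x y. scale c x * y = scale c (x * y)" and mR: "\<And>c x y. x * scale c y = scale c (x * y)"
    using alg unfolding algebra_over_def by metis+
  have Dadd: "\<And>x y. tensor_eq scale (Delta (x + y)) (Delta x @ Delta y)"
    and Dmul: "\<And>a b. tensor_eq scale (Delta (a * b))
              (concat (map (\<lambda>(x, y). map (\<lambda>(x', y'). (x * x', y * y')) (Delta b)) (Delta a)))"
    and cu1: "\<And>a. (\<Sum>(x, y)\<leftarrow>Delta a. scale (eps y) x) = a"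
    and cu2: "\<And>a. (\<Sum>(x, y)\<leftarrow>Delta a. scale (eps x) y) = a"
    and epsmul: "\<And>a b. eps (a * b) = eps a * eps b" and eps1: "eps 1 = 1"
    and epslin: "Vector_Spaces.linear scale (*) eps"
    using bialg unfolding bialgebra_def by blast+
  interpret E: Vector_Spaces.linear scale "(*)" eps by (rule epslin)
  interpret P1: Vector_Spaces.linear scale scale Pi1 by (rule Pi1_lin)
  interpret P2: Vector_Spaces.linear scale scale Pi2 by (rule Pi2_lin)
  have A1mul: "\<And>x y. x \<in> A1 \<Longrightarrow> y \<in> A1 \<Longrightarrow> x * y \<in> A1" and A1one: "1 \<in> A1"
    using sub1 unfolding subalgebra_def by blast+
  have A2mul: "\<And>x y. x \<in> A2 \<Longrightarrow> y \<in> A2 \<Longrightarrow> x * y \<in> A2" and A2one: "1 \<in> A2"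
    using sub2 unfolding subalgebra_def by blast+
  have scsum: "\<And>c xs (F :: 'a \<Rightarrow> 'a \<Rightarrow> 'a). scale c (\<Sum>(x, y)\<leftarrow>xs. F x y) = (\<Sum>(x, y)\<leftarrow>xs. scale c (F x y))"
    by (rule hom_sum_list) (auto simp: V.scale_right_distrib)
  have Pi1R0: "set ps \<subseteq> A1 \<times> A2 \<Longrightarrow> Pi1 ((\<Sum>(x, y)\<leftarrow>ps. x * y) * a2) = scale (eps a2) (Pi1 (\<Sum>(x, y)\<leftarrow>ps. x * y))"
    if "a2 \<in> A2" for ps a2
  proof (induction ps)
    case (Cons p ps)
    obtain b1 b2 where p: "p = (b1, b2)" by fastforce
    with Cons have b: "b1 \<in> A1" "b2 \<in> A2" by auto
    have "(b1 * b2 + (\<Sum>(x, y)\<leftarrow>ps. x * y)) * a2 = b1 * (b2 * a2) + (\<Sum>(x, y)\<leftarrow>ps. x * y) * a2"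
      by (simp add: distrib_right mult.assoc)
    then show ?case using Cons b that p Pi1_def A2mul
      by (simp add: P1.add epsmul V.scale_right_distrib mult.commute)
  qed simp
  have Pi1R: "\<And>x a2. a2 \<in> A2 \<Longrightarrow> Pi1 (x * a2) = scale (eps a2) (Pi1 x)"
    using Pi1R0 mu_surj by metis
  have Pi2L0: "set ps \<subseteq> A1 \<times> A2 \<Longrightarrow> Pi2 (a1 * (\<Sum>(x, y)\<leftarrow>ps. x * y)) = scale (eps a1) (Pi2 (\<Sum>(x, y)\<leftarrow>ps. x * y))"
    if "a1 \<in> A1" for ps a1
  proof (induction ps)
    case (Cons p ps)
    obtain b1 b2 where p: "p = (b1, b2)" by fastforce
    with Cons have b: "b1 \<in> A1" "b2 \<in> A2" by auto
    have "a1 * (b1 * b2 + (\<Sum>(x, y)\<leftarrow>ps. x * y)) = (a1 * b1) * b2 + a1 * (\<Sum>(x, y)\<leftarrow>ps. x * y)"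
      by (simp add: distrib_left mult.assoc)
    then show ?case using Cons b that p Pi2_def A1mul
      by (simp add: P2.add epsmul V.scale_right_distrib)
  qed simp
  have Pi2L: "\<And>x a1. a1 \<in> A1 \<Longrightarrow> Pi2 (a1 * x) = scale (eps a1) (Pi2 x)"
    using Pi2L0 mu_surj by metis
  define G where "G a = (\<Sum>(x, y)\<leftarrow>Delta a. Pi1 x * Pi2 y)" for a
  have Gadd: "G (x + y) = G x + G y" for x y
  proof -
    have "G (x + y) = (\<Sum>(x, y)\<leftarrow>Delta x @ Delta y. Pi1 x * Pi2 y)"
      unfolding G_def
      by (rule transfer[OF vs Dadd]) (auto simp: P1.add P2.add P1.scale P2.scale distrib_left distrib_right mL mR)
    then show ?thesis by (simp add: G_def)
  qed
  have G0: "G 0 = 0" using Gadd[of 0 0] by simp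
  have key: "G (a1 * a2) = a1 * a2" if a1: "a1 \<in> A1" and a2: "a2 \<in> A2" for a1 a2
  proof -
    obtain ps1 where ps1: "snd ` set ps1 \<subseteq> A1" "tensor_eq scale (Delta a1) ps1" using Delta1 a1 by blast
    obtain ps2 where ps2: "fst ` set ps2 \<subseteq> A2" "tensor_eq scale (Delta a2) ps2" using Delta2 a2 by blast
    have "G (a1 * a2) = (\<Sum>(x, y)\<leftarrow>concat (map (\<lambda>(x, y). map (\<lambda>(x', y'). (x * x', y * y')) (Delta a2)) (Delta a1)). Pi1 x * Pi2 y)"
      unfolding G_def
      by (rule transfer[OF vs Dmul]) (auto simp: P1.add P2.add P1.scale P2.scale distrib_left distrib_right mL mR)
    also have "\<dots> = (\<Sum>(x, y)\<leftarrow>Delta a1. \<Sum>(x', y')\<leftarrow>Delta a2. Pi1 (x * x') * Pi2 (y * y'))"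
      by (simp add: sum_list_map_concat comp_def case_prod_beta split_def)
    also have "\<dots> = (\<Sum>(x, y)\<leftarrow>Delta a1. \<Sum>(x', y')\<leftarrow>ps2. Pi1 (x * x') * Pi2 (y * y'))"
    proof (intro arg_cong[where f = sum_list] map_cong refl, clarify)
      fix x y
      show "(\<Sum>(x', y')\<leftarrow>Delta a2. Pi1 (x * x') * Pi2 (y * y')) = (\<Sum>(x', y')\<leftarrow>ps2. Pi1 (x * x') * Pi2 (y * y'))"
        by (rule transfer[OF vs ps2(2)]) (auto simp: P1.add P2.add P1.scale P2.scale distrib_left distrib_right mL mR)
    qed
    also have "\<dots> = (\<Sum>(x, y)\<leftarrow>ps1. \<Sum>(x', y')\<leftarrow>ps2. Pi1 (x * x') * Pi2 (y * y'))"
      by (rule transfer[OF vs ps1(2)])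
        (auto simp: P1.add P2.add P1.scale P2.scale distrib_left distrib_right mL mR sum_list_addf2 scsum)
    also have "\<dots> = (\<Sum>(x, y)\<leftarrow>ps1. \<Sum>(x', y')\<leftarrow>ps2. scale (eps y) (Pi1 x) * scale (eps x') (Pi2 y'))"
    proof (intro arg_cong[where f = sum_list] map_cong refl, clarify)
      fix x y assume "(x, y) \<in> set ps1"
      then have y: "y \<in> A1" using ps1(1) by force
      show "(\<Sum>(x', y')\<leftarrow>ps2. Pi1 (x * x') * Pi2 (y * y')) = (\<Sum>(x', y')\<leftarrow>ps2. scale (eps y) (Pi1 x) * scale (eps x') (Pi2 y'))"
      proof (intro arg_cong[where f = sum_list] map_cong refl, clarify)
        fix x' y' assume "(x', y') \<in> set ps2"
        then have x': "x' \<in> A2" using ps2(1) by force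
        show "Pi1 (x * x') * Pi2 (y * y') = scale (eps y) (Pi1 x) * scale (eps x') (Pi2 y')"
          using Pi1R[OF x'] Pi2L[OF y] by (simp add: mL mR V.scale_scale mult.commute)
      qed
    qed
    also have "\<dots> = (\<Sum>(x, y)\<leftarrow>ps1. scale (eps y) (Pi1 x)) * (\<Sum>(x', y')\<leftarrow>ps2. scale (eps x') (Pi2 y'))"
    proof -
      let ?R = "(\<Sum>(x', y')\<leftarrow>ps2. scale (eps x') (Pi2 y'))"
      have r: "(\<Sum>(x, y)\<leftarrow>ps1. scale (eps y) (Pi1 x)) * ?R = (\<Sum>(x, y)\<leftarrow>ps1. scale (eps y) (Pi1 x) * ?R)"
        by (rule hom_sum_list[where h = "\<lambda>z. z * ?R"]) (auto simp: distrib_right)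
      have l: "\<And>L. L * ?R = (\<Sum>(x', y')\<leftarrow>ps2. L * scale (eps x') (Pi2 y'))"
        by (rule hom_sum_list) (auto simp: distrib_left)
      show ?thesis unfolding r
        by (intro arg_cong[where f = sum_list] map_cong refl, clarify) (rule l[symmetric])
    qed
    also have "(\<Sum>(x, y)\<leftarrow>ps1. scale (eps y) (Pi1 x)) = Pi1 (\<Sum>(x, y)\<leftarrow>ps1. scale (eps y) x)"
      by (simp add: hom_sum_list[OF P1.add P1.zero] P1.scale)
    also have "(\<Sum>(x, y)\<leftarrow>ps1. scale (eps y) x) = (\<Sum>(x, y)\<leftarrow>Delta a1. scale (eps y) x)"
      by (rule transfer[OF vs ps1(2), symmetric])
        (auto simp: E.add E.scale V.scale_right_distrib V.scale_left_distrib V.scale_scale mult.commute)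
    also have "(\<Sum>(x', y')\<leftarrow>ps2. scale (eps x') (Pi2 y')) = Pi2 (\<Sum>(x', y')\<leftarrow>ps2. scale (eps x') y')"
      by (simp add: hom_sum_list[OF P2.add P2.zero] P2.scale)
    also have "(\<Sum>(x', y')\<leftarrow>ps2. scale (eps x') y') = (\<Sum>(x, y)\<leftarrow>Delta a2. scale (eps x) y)"
      by (rule transfer[OF vs ps2(2), symmetric])
        (auto simp: E.add E.scale V.scale_right_distrib V.scale_left_distrib V.scale_scale mult.commute)
    also have "(\<Sum>(x, y)\<leftarrow>Delta a1. scale (eps y) x) = a1" by (rule cu1)
    also have "(\<Sum>(x, y)\<leftarrow>Delta a2. scale (eps x) y) = a2" by (rule cu2)
    also have "Pi1 a1 = a1" using Pi1_def A2one a1 eps1 by (metis mult_1_right V.scale_one)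
    also have "Pi2 a2 = a2" using Pi2_def A1one a2 eps1 by (metis mult_1_left V.scale_one)
    finally show ?thesis .
  qed
  obtain ps where ps: "set ps \<subseteq> A1 \<times> A2" "a = (\<Sum>(x, y)\<leftarrow>ps. x * y)" using mu_surj by blast
  have "G a = (\<Sum>(x, y)\<leftarrow>ps. G (x * y))" unfolding ps(2)
    by (rule hom_sum_list[OF Gadd G0])
  also have "\<dots> = (\<Sum>(x, y)\<leftarrow>ps. x * y)"
    using ps(1) by (intro arg_cong[where f = sum_list] map_cong) (auto intro: key)
  finally show ?thesis using ps(2) by (simp add: G_def)
qed

end
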